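(* Let $s_1,s_2$ be prime powers and for $j=1,2$ let $D_j$ be a difference matrix $D(b_j,c_j,s_j)$ over the additive group of $\mathrm{GF}(s_j)$. Let $c_0$ be an integer with $1\le c_0\le\min(c_1,c_2)$, and partition $D_j=[D_{j0},D_{j1}]$ where $D_{j0}$ consists of the first $c_0$ columns. Write $\alpha_{i,k}$ for the $(i,k)$ entry of $D_1$ and $\beta_{j,k}$ for the $(j,k)$ entry of $D_2$. Let $D_0$ be the $b_1b_2\times c_0$ matrix with entries in $\mathrm{GF}(s_1)\times\mathrm{GF}(s_2)$ whose entry in row $(i-1)b_2+j$ and column $k$ is $(\alpha_{i,k},\beta_{j,k})$, for $1\le i\le b_1$, $1\le j\le b_2$, $1\le k\le c_0$. Let $D_{11}^*$ be the $b_1b_2\times(c_1-c_0)$ matrix whose row $(i-1)b_2+j$ is the $i$th row of $D_{11}$, and $D_{21}^*$ the $b_1b_2\times(c_2-c_0)$ matrix whose row $(i-1)b_2+j$ is the $j$th row of $D_{21}$. Then: (i) $D_0$ is a difference matrix $D(b_1b_2,c_0,s_1s_2)$ over the group $\mathrm{GF}(s_1)\times\mathrm{GF}(s_2)$ (addition componentwise); (ii) for $j=1,2$, $D_{j1}^*$ is a difference matrix $D(b_1b_2,c_j-c_0,s_j)$; (iii) for $j=1,2$, $[\sigma_j(D_0),D_{j1}^*]$ is a difference matrix $D(b_1b_2,c_j,s_j)$.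
   Context: A difference matrix $D(b,c,g)$ over an abelian group of order $g$ is a $b\times c$ array with entries in the group such that for any two distinct columns their entrywise difference contains every group element equally often. For a matrix whose entries are pairs, $\sigma_j$ denotes taking the $j$th component of every entry. *)

theory Defs
  imports Main "HOL-Library.Product_Plus"
begin

text \<open>Matrices are functions nat => nat => 'g; a b x c matrix uses the rows 0..<b and
columns 0..<c (0-based indexing). The abelian group is the type 'g (order CARD('g)).\<close>

definition diff_matrix :: "nat \<Rightarrow> nat \<Rightarrow> (nat \<Rightarrow> nat \<Rightarrow> 'g::{ab_group_add,finite}) \<Rightarrow> bool" where
  "diff_matrix b c D \<longleftrightarrow>
     (\<forall>k1<c. \<forall>k2<c. k1 \<noteq> k2 \<longrightarrow>
        (\<forall>x y :: 'g. card {i. i < b \<and> D i k1 - D i k2 = x} = card {i. i < b \<and> D i k1 - D i k2 = y}))"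

definition hcat :: "nat \<Rightarrow> (nat \<Rightarrow> nat \<Rightarrow> 'a) \<Rightarrow> (nat \<Rightarrow> nat \<Rightarrow> 'a) \<Rightarrow> nat \<Rightarrow> nat \<Rightarrow> 'a" where
  "hcat c A B = (\<lambda>r k. if k < c then A r k else B r (k - c))"

definition sigma1 :: "(nat \<Rightarrow> nat \<Rightarrow> 'a \<times> 'b) \<Rightarrow> nat \<Rightarrow> nat \<Rightarrow> 'a" where
  "sigma1 M = (\<lambda>r k. fst (M r k))"

definition sigma2 :: "(nat \<Rightarrow> nat \<Rightarrow> 'a \<times> 'b) \<Rightarrow> nat \<Rightarrow> nat \<Rightarrow> 'b" where
  "sigma2 M = (\<lambda>r k. snd (M r k))"

end

theory Submission
  imports Defs
begin

lemma prod_count: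
  fixes A B :: "nat \<Rightarrow> bool"
  shows "card {r. r < b1*b2 \<and> A (r div b2) \<and> B (r mod b2)}
       = card {i. i<b1 \<and> A i} * card {j. j<b2 \<and> B j}"
proof -
  have eq: "{r. r < b1*b2 \<and> A (r div b2) \<and> B (r mod b2)}
      = (\<lambda>(i,j). i*b2+j) ` ({i. i<b1 \<and> A i} \<times> {j. j<b2 \<and> B j})"
  proof (rule set_eqI, rule iffI)
    fix r assume "r \<in> {r. r < b1*b2 \<and> A (r div b2) \<and> B (r mod b2)}"
    hence r: "r < b1*b2" "A (r div b2)" "B (r mod b2)" by auto
    have b2: "b2 > 0" using r(1) by (cases b2) auto
    have "r div b2 < b1" using r(1) b2 by (simp add: less_mult_imp_div_less)
    moreover have "r mod b2 < b2" using b2 by simp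
    moreover have "r = (r div b2)*b2 + r mod b2" by simp
    ultimately show "r \<in> (\<lambda>(i,j). i*b2+j) ` ({i. i<b1 \<and> A i} \<times> {j. j<b2 \<and> B j})"
      using r by (intro image_eqI[of _ _ "(r div b2, r mod b2)"]) auto
  next
    fix r assume "r \<in> (\<lambda>(i,j). i*b2+j) ` ({i. i<b1 \<and> A i} \<times> {j. j<b2 \<and> B j})"
    then obtain i j where r: "r = i*b2+j" "i<b1" "A i" "j<b2" "B j" by auto
    have "i*b2+j < (i+1)*b2" using r by simp
    also have "\<dots> \<le> b1*b2" using r by (intro mult_right_mono) auto
    finally have "r < b1*b2" using r by simp
    moreover have "r div b2 = i" "r mod b2 = j" using r by auto
    ultimately show "r \<in> {r. r < b1*b2 \<and> A (r div b2) \<and> B (r mod b2)}" using r by auto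
  qed
  have inj: "inj_on (\<lambda>(i,j). i*b2+j) ({i. i<b1 \<and> A i} \<times> {j. j<b2 \<and> B j})"
  proof (rule inj_onI, clarsimp)
    fix i j i' j' assume "j < b2" "j' < b2" "i*b2+j = i'*b2+j'"
    then have "(i*b2+j) div b2 = (i'*b2+j') div b2" "(i*b2+j) mod b2 = (i'*b2+j') mod b2" by auto
    thus "i = i' \<and> j = j'" using \<open>j<b2\<close> \<open>j'<b2\<close> by auto
  qed
  show ?thesis unfolding eq card_image[OF inj] card_cartesian_product ..
qed

lemma div_ext:
  assumes "diff_matrix b c (D::nat\<Rightarrow>nat\<Rightarrow>'g::{ab_group_add,finite})"
  shows "diff_matrix (b*b2) c (\<lambda>r k. D (r div b2) k)"
  unfolding diff_matrix_def
proof (intro allI impI)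
  fix k1 k2 x y assume k: "k1 < c" "k2 < c" "k1 \<noteq> k2"
  have "\<And>z. card {r. r < b*b2 \<and> D (r div b2) k1 - D (r div b2) k2 = z}
     = card {i. i<b \<and> D i k1 - D i k2 = z} * b2"
    using prod_count[of b b2 "\<lambda>i. D i k1 - D i k2 = _" "\<lambda>_. True"] by simp
  moreover have "card {i. i<b \<and> D i k1 - D i k2 = x} = card {i. i<b \<and> D i k1 - D i k2 = y}"
    using assms k unfolding diff_matrix_def by blast
  ultimately show "card {i. i < b * b2 \<and> D (i div b2) k1 - D (i div b2) k2 = x} =
       card {i. i < b * b2 \<and> D (i div b2) k1 - D (i div b2) k2 = y}" by simp
qed

lemma mod_ext:
  assumes "diff_matrix b c (D::nat\<Rightarrow>nat\<Rightarrow>'g::{ab_group_add,finite})"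
  shows "diff_matrix (b1*b) c (\<lambda>r k. D (r mod b) k)"
  unfolding diff_matrix_def
proof (intro allI impI)
  fix k1 k2 x y assume k: "k1 < c" "k2 < c" "k1 \<noteq> k2"
  have "\<And>z. card {r. r < b1*b \<and> D (r mod b) k1 - D (r mod b) k2 = z}
     = b1 * card {i. i<b \<and> D i k1 - D i k2 = z}"
    using prod_count[of b1 b "\<lambda>_. True" "\<lambda>i. D i k1 - D i k2 = _"] by simp
  moreover have "card {i. i<b \<and> D i k1 - D i k2 = x} = card {i. i<b \<and> D i k1 - D i k2 = y}"
    using assms k unfolding diff_matrix_def by blast
  ultimately show "card {i. i < b1 * b \<and> D (i mod b) k1 - D (i mod b) k2 = x} =
       card {i. i < b1 * b \<and> D (i mod b) k1 - D (i mod b) k2 = y}" by simp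
qed

lemma shift:
  assumes "diff_matrix b c (D::nat\<Rightarrow>nat\<Rightarrow>'g::{ab_group_add,finite})"
  shows "diff_matrix b (c - c0) (\<lambda>r k. D r (c0 + k))"
  unfolding diff_matrix_def
proof (intro allI impI)
  fix k1 k2 x y assume k: "k1 < c - c0" "k2 < c - c0" "k1 \<noteq> k2"
  hence "c0 + k1 < c" "c0 + k2 < c" "c0 + k1 \<noteq> c0 + k2" by auto
  thus "card {i. i < b \<and> D i (c0 + k1) - D i (c0 + k2) = x} =
        card {i. i < b \<and> D i (c0 + k1) - D i (c0 + k2) = y}"
    using assms unfolding diff_matrix_def by blast
qed

theorem lemma7:
  fixes D1 :: "nat \<Rightarrow> nat \<Rightarrow> 'a::{field,finite}"
    and D2 :: "nat \<Rightarrow> nat \<Rightarrow> 'b::{field,finite}"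
    and b1 c1 b2 c2 c0 :: nat
  assumes "diff_matrix b1 c1 D1" and "diff_matrix b2 c2 D2"
    and "1 \<le> c0" and "c0 \<le> min c1 c2"
  defines "D0 \<equiv> (\<lambda>r k. (D1 (r div b2) k, D2 (r mod b2) k))"
    and "D11s \<equiv> (\<lambda>r k. D1 (r div b2) (c0 + k))"
    and "D21s \<equiv> (\<lambda>r k. D2 (r mod b2) (c0 + k))"
  shows "diff_matrix (b1 * b2) c0 D0
         \<and> diff_matrix (b1 * b2) (c1 - c0) D11s
         \<and> diff_matrix (b1 * b2) (c2 - c0) D21s
         \<and> diff_matrix (b1 * b2) c1 (hcat c0 (sigma1 D0) D11s)
         \<and> diff_matrix (b1 * b2) c2 (hcat c0 (sigma2 D0) D21s)"
proof -
  have h1: "hcat c0 (sigma1 D0) D11s = (\<lambda>r k. D1 (r div b2) k)"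
    unfolding hcat_def sigma1_def D0_def D11s_def by (auto intro!: ext)
  have h2: "hcat c0 (sigma2 D0) D21s = (\<lambda>r k. D2 (r mod b2) k)"
    unfolding hcat_def sigma2_def D0_def D21s_def by (auto intro!: ext)
  have p1: "diff_matrix (b1 * b2) c1 (\<lambda>r k. D1 (r div b2) k)" using div_ext[OF assms(1)] .
  have p2: "diff_matrix (b1 * b2) c2 (\<lambda>r k. D2 (r mod b2) k)" using mod_ext[OF assms(2)] .
  have q1: "diff_matrix (b1 * b2) (c1 - c0) D11s"
    unfolding D11s_def using shift[OF p1, of c0] by simp
  have q2: "diff_matrix (b1 * b2) (c2 - c0) D21s"
    unfolding D21s_def using shift[OF p2, of c0] by simp
  have d0: "diff_matrix (b1 * b2) c0 D0"
    unfolding diff_matrix_def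
  proof (intro allI impI)
    fix k1 k2 assume k: "k1 < c0" "k2 < c0" "k1 \<noteq> k2"
    fix x y :: "'a \<times> 'b"
    have k1: "k1 < c1" "k2 < c1" "k1 < c2" "k2 < c2" using k assms(4) by auto
    have e: "\<And>z. card {r. r < b1*b2 \<and> D0 r k1 - D0 r k2 = z}
       = card {i. i<b1 \<and> D1 i k1 - D1 i k2 = fst z} * card {j. j<b2 \<and> D2 j k1 - D2 j k2 = snd z}"
    proof -
      fix z :: "'a \<times> 'b"
      have "{r. r < b1*b2 \<and> D0 r k1 - D0 r k2 = z}
        = {r. r < b1*b2 \<and> D1 (r div b2) k1 - D1 (r div b2) k2 = fst z \<and> D2 (r mod b2) k1 - D2 (r mod b2) k2 = snd z}"
        unfolding D0_def by (cases z) auto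
      thus "?thesis z" using prod_count by simp
    qed
    have a: "card {i. i<b1 \<and> D1 i k1 - D1 i k2 = fst x} = card {i. i<b1 \<and> D1 i k1 - D1 i k2 = fst y}"
      using assms(1) k k1 unfolding diff_matrix_def by blast
    have b: "card {i. i<b2 \<and> D2 i k1 - D2 i k2 = snd x} = card {i. i<b2 \<and> D2 i k1 - D2 i k2 = snd y}"
      using assms(2) k k1 unfolding diff_matrix_def by blast
    show "card {i. i < b1 * b2 \<and> D0 i k1 - D0 i k2 = x} = card {i. i < b1 * b2 \<and> D0 i k1 - D0 i k2 = y}"
      using e a b by simp
  qed
  show ?thesis using d0 q1 q2 p1 p2 h1 h2 by simp
qed

end
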